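(* Let $\mathbb{Y},\mathbb{T}$ be sets, let $\underline{\mathsf{P}}_{Y,\Theta}$ be a coherent lower prevision on the bounded gambles on $\mathbb{Y}\times\mathbb{T}$ with conjugate upper prevision $\overline{\mathsf{P}}_{Y,\Theta}$, and let $y\mapsto(\underline{\Pi}_y,\overline{\Pi}_y)$ be an inferential model. Suppose the IM is valid, i.e., $$\overline{\mathsf{P}}_{Y,\Theta}\bigl(\{(y,\theta):\underline{\Pi}_y(H)>1-\alpha,\ \theta\notin H\}\bigr)\le\alpha\quad\text{for all }H\subseteq\mathbb{T},\ \alpha\in[0,1].$$ Then there is no sure-loss relative to the prior assessments: $\inf_{y\in\mathbb{Y}}\underline{\Pi}_y(H)\le\overline{\mathsf{P}}_\Theta(H)$ for all $H\subseteq\mathbb{T}$, where $\overline{\mathsf{P}}_\Theta(H)=\overline{\mathsf{P}}_{Y,\Theta}(\mathbb{Y}\times H)$.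
   Context: A lower prevision $\underline{\mathsf{P}}$ on the linear space of bounded gambles on a set $\Omega$ is coherent if for all integers $m,K\ge0$ and all bounded gambles $f_0,\dots,f_K$, $\sup_{\omega}\bigl[\sum_{k=1}^K\{f_k(\omega)-\underline{\mathsf{P}}(f_k)\}-m\{f_0(\omega)-\underline{\mathsf{P}}(f_0)\}\bigr]\ge0$; its conjugate upper prevision is $\overline{\mathsf{P}}(f)=-\underline{\mathsf{P}}(-f)$, and for a set $B$, $\underline{\mathsf{P}}(B)=\underline{\mathsf{P}}(1_B)$, $\overline{\mathsf{P}}(B)=\overline{\mathsf{P}}(1_B)$. An inferential model (IM) is a map $y\mapsto(\underline{\Pi}_y,\overline{\Pi}_y)$ assigning to each $y\in\mathbb{Y}$ a coherent lower prevision $\underline{\Pi}_y$ (with conjugate upper prevision $\overline{\Pi}_y$) on bounded gambles on $\mathbb{T}$; $\underline{\Pi}_y(H)=\underline{\Pi}_y(1_H)$ for $H\subseteq\mathbb{T}$. *)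

theory Defs
  imports Complex_Main "HOL-Library.Indicator_Function"
begin

definition bounded_gamble :: "('a \<Rightarrow> real) \<Rightarrow> bool" where
  "bounded_gamble f \<longleftrightarrow> (\<exists>B. \<forall>x. \<bar>f x\<bar> \<le> B)"

text \<open>Coherence of a lower prevision (only its values on bounded gambles matter).\<close>
definition coherent_lower_prevision :: "(('a \<Rightarrow> real) \<Rightarrow> real) \<Rightarrow> bool" where
  "coherent_lower_prevision P \<longleftrightarrow>
     (\<forall>(m::nat) (K::nat) (f::nat \<Rightarrow> 'a \<Rightarrow> real).
        (\<forall>k\<le>K. bounded_gamble (f k)) \<longrightarrow>
        0 \<le> (SUP \<omega>. (\<Sum>k=1..K. f k \<omega> - P (f k)) - real m * (f 0 \<omega> - P (f 0))))"

definition upper_prevision :: "(('a \<Rightarrow> real) \<Rightarrow> real) \<Rightarrow> ('a \<Rightarrow> real) \<Rightarrow> real" where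
  "upper_prevision P f = - P (\<lambda>x. - f x)"

definition inferential_model :: "('y \<Rightarrow> ('t \<Rightarrow> real) \<Rightarrow> real) \<Rightarrow> bool" where
  "inferential_model IM \<longleftrightarrow> (\<forall>y. coherent_lower_prevision (IM y))"

definition valid_IM :: "(('y \<times> 't \<Rightarrow> real) \<Rightarrow> real) \<Rightarrow> ('y \<Rightarrow> ('t \<Rightarrow> real) \<Rightarrow> real) \<Rightarrow> bool" where
  "valid_IM P IM \<longleftrightarrow>
     (\<forall>(H::'t set) (\<alpha>::real). 0 \<le> \<alpha> \<and> \<alpha> \<le> 1 \<longrightarrow>
        upper_prevision P (indicator {(y, \<theta>). IM y (indicator H) > 1 - \<alpha> \<and> \<theta> \<notin> H}) \<le> \<alpha>)"

end

theory Submission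
  imports Defs
begin

lemma bg_ind: "bounded_gamble (\<lambda>x. - indicator A x :: real)" "bounded_gamble (indicator A :: _ \<Rightarrow> real)"
  unfolding bounded_gamble_def by (auto intro!: exI[of _ 1] simp: indicator_def)

lemma coh_upper:
  assumes "coherent_lower_prevision P" "bounded_gamble g" "\<And>\<omega>. g \<omega> \<le> b"
  shows "P g \<le> b"
proof -
  have "0 \<le> (SUP \<omega>. (\<Sum>k=1..(1::nat). (\<lambda>_. g) k \<omega> - P ((\<lambda>_. g) k)) - real 0 * ((\<lambda>_. g) 0 \<omega> - P ((\<lambda>_. g) 0)))"
    using assms(1,2) unfolding coherent_lower_prevision_def
    by (elim allE[of _ 0] allE[of _ 1] allE[of _ "\<lambda>_. g"] impE; (assumption | use assms(2) in auto))
  also have "\<dots> \<le> b - P g"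
    by (rule cSUP_least) (auto intro: assms(3) simp: diff_right_mono)
  finally show ?thesis by simp
qed

lemma coh_lower:
  assumes "coherent_lower_prevision P" "bounded_gamble g" "\<And>\<omega>. g \<omega> \<ge> b"
  shows "P g \<ge> b"
proof -
  have "0 \<le> (SUP \<omega>. (\<Sum>k=1..(0::nat). (\<lambda>_. g) k \<omega> - P ((\<lambda>_. g) k)) - real 1 * ((\<lambda>_. g) 0 \<omega> - P ((\<lambda>_. g) 0)))"
    using assms(1,2) unfolding coherent_lower_prevision_def
    by (elim allE[of _ 1] allE[of _ 0] allE[of _ "\<lambda>_. g"] impE; (assumption | use assms(2) in auto))
  also have "\<dots> \<le> P g - b"
    by (rule cSUP_least) (auto intro: assms(3) simp: diff_right_mono)
  finally show ?thesis by simp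
qed

lemma coh_two:
  assumes "coherent_lower_prevision P"
  shows "P (\<lambda>x. - indicator A x) + P (\<lambda>x. - indicator (- A) x) \<le> (-1::real)"
proof -
  define f :: "nat \<Rightarrow> _ \<Rightarrow> real" where "f = (\<lambda>k. if k = 1 then (\<lambda>x. - indicator A x) else (\<lambda>x. - indicator (- A) x))"
  have b: "\<forall>k\<le>2. bounded_gamble (f k)" unfolding f_def using bg_ind by auto
  have "0 \<le> (SUP \<omega>. (\<Sum>k=1..2. f k \<omega> - P (f k)) - real 0 * (f 0 \<omega> - P (f 0)))"
    using assms b unfolding coherent_lower_prevision_def
    by (elim allE[of _ 0] allE[of _ 2] allE[of _ f] impE; (assumption | use b in auto))
  also have "\<dots> \<le> -1 - P (\<lambda>x. - indicator A x) - P (\<lambda>x. - indicator (- A) x)"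
    by (rule cSUP_least) (auto simp: f_def indicator_def numeral_2_eq_2)
  finally show ?thesis by simp
qed

theorem proposition2:
  fixes P :: "('y \<times> 't \<Rightarrow> real) \<Rightarrow> real"
    and IM :: "'y \<Rightarrow> ('t \<Rightarrow> real) \<Rightarrow> real"
  assumes "coherent_lower_prevision P"
    and "inferential_model IM"
    and "valid_IM P IM"
  shows "\<forall>H :: 't set. (INF y. IM y (indicator H)) \<le> upper_prevision P (indicator (UNIV \<times> H))"
proof
  fix H :: "'t set"
  define c where "c = (INF y. IM y (indicator H))"
  define u where "u = upper_prevision P (indicator (UNIV \<times> H))"
  have coh: "coherent_lower_prevision (IM y)" for y using assms(2) unfolding inferential_model_def by blast
  have ge0: "IM y (indicator H) \<ge> 0" for y
    by (rule coh_lower[OF coh bg_ind(2)]) auto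
  have le1: "IM y (indicator H) \<le> 1" for y
    by (rule coh_upper[OF coh bg_ind(2)]) (auto simp: indicator_def)
  have bdd: "bdd_below (range (\<lambda>y. IM y (indicator H)))" using ge0 by (intro bdd_belowI[of _ 0]) auto
  have cle: "c \<le> IM y (indicator H)" for y unfolding c_def by (rule cINF_lower[OF bdd]) auto
  have c1: "c \<le> 1" using cle[of undefined] le1[of undefined] by linarith
  have u0: "u \<ge> 0" unfolding u_def upper_prevision_def
    using coh_upper[OF assms(1) bg_ind(1), of "UNIV \<times> H" 0] by (auto simp: indicator_def)
  show "c \<le> u"
  proof (rule ccontr)
    assume "\<not> c \<le> u"
    hence uc: "u < c" by simp
    define \<alpha> where "\<alpha> = 1 - (u + c) / 2"
    have a01: "0 \<le> \<alpha>" "\<alpha> \<le> 1" using uc u0 c1 unfolding \<alpha>_def by auto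
    have set: "{(y, \<theta>). IM y (indicator H) > 1 - \<alpha> \<and> \<theta> \<notin> H} = - (UNIV \<times> H)"
    proof -
      have "1 - \<alpha> < IM y (indicator H)" for y using cle[of y] uc unfolding \<alpha>_def by (simp add: field_simps)
      thus ?thesis by auto
    qed
    define v where "v = upper_prevision P (indicator (- (UNIV \<times> H)))"
    have v1: "v \<le> \<alpha>"
      using assms(3) a01 unfolding valid_IM_def set[symmetric] v_def by blast
    have v2: "1 \<le> u + v"
      using coh_two[OF assms(1), of "UNIV \<times> H"] unfolding u_def v_def upper_prevision_def by simp
    show False using v1 v2 uc unfolding \<alpha>_def by (simp add: field_simps)
  qed
qed

end
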